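(* Fix $\delta>0$ and let $T:\mathbb{N}\to\mathbb{N}_{\ge1}$ be a query budget depending on the dimension $d$. (1) If $\ln T(d)=o(d)$ as $d\to\infty$, then $\mathsf{ExcessErr}_d(T(d),\delta)\to+\infty$ as $d\to\infty$. (2) If $\ln T(d)/d\to+\infty$ as $d\to\infty$, then $\mathsf{ExcessErr}_d(T(d),\delta)\to 0$ as $d\to\infty$.
   Context: Linear reconstruction game: fix $d\ge 1$, a number of rounds $T\ge 0$ and a noise level $\delta>0$. An adversary holds a secret point $x^*\in\mathbb{R}^d$. In each round $t=1,\dots,T$ the reconstructor chooses a unit vector $v_t\in S^{d-1}$ (possibly adaptively, as a function of previous answers) and the adversary returns a real number $r_t$ with $|r_t-\langle x^*,v_t\rangle|\le\delta$. After $T$ rounds the reconstructor outputs $\hat x_T\in\mathbb{R}^d$. All strategies are deterministic. The optimal reconstruction error is $\mathrm{OPT}_d(T,\delta)=\inf_{\mathcal R}\sup_{x^*\in\mathbb{R}^d}\sup_{\mathcal A}\|\hat x_T-x^*\|_2$, where $\mathcal R$ ranges over reconstructor strategies for $T$ rounds and $\mathcal A$ over adversary answer strategies satisfying the noise constraint for the secret $x^*$. This quantity is nonincreasing in $T$; set $\mathrm{OPT}_d(\infty,\delta):=\lim_{T\to\infty}\mathrm{OPT}_d(T,\delta)$ and $\mathsf{ExcessErr}_d(T,\delta):=\mathrm{OPT}_d(T,\delta)-\mathrm{OPT}_d(\infty,\delta)$. *)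

theory Defs
  imports "HOL-Analysis.Analysis" "HOL-Library.Landau_Symbols"
begin

text \<open>Points of R^d are represented as functions nat => real vanishing outside {..<d}.\<close>

definition vecs :: "nat \<Rightarrow> (nat \<Rightarrow> real) set" where
  "vecs d = {x. \<forall>i\<ge>d. x i = 0}"

definition ip :: "nat \<Rightarrow> (nat \<Rightarrow> real) \<Rightarrow> (nat \<Rightarrow> real) \<Rightarrow> real" where
  "ip d x y = (\<Sum>i<d. x i * y i)"

definition nrm :: "nat \<Rightarrow> (nat \<Rightarrow> real) \<Rightarrow> real" where
  "nrm d x = sqrt (ip d x x)"

definition usphere :: "nat \<Rightarrow> (nat \<Rightarrow> real) set" where
  "usphere d = {v \<in> vecs d. ip d v v = 1}"

text \<open>A deterministic adaptive reconstructor: the query in round t+1 is q applied to the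
  list of the first t answers; the output is out applied to the list of all T answers.\<close>

definition valid_recon :: "nat \<Rightarrow> (real list \<Rightarrow> (nat \<Rightarrow> real)) \<Rightarrow> (real list \<Rightarrow> (nat \<Rightarrow> real)) \<Rightarrow> bool" where
  "valid_recon d q out \<longleftrightarrow> (\<forall>rs. q rs \<in> usphere d) \<and> (\<forall>rs. out rs \<in> vecs d)"

definition consistent :: "nat \<Rightarrow> nat \<Rightarrow> real \<Rightarrow> (real list \<Rightarrow> (nat \<Rightarrow> real)) \<Rightarrow> (nat \<Rightarrow> real) \<Rightarrow> real list \<Rightarrow> bool" where
  "consistent d T \<delta> q x rs \<longleftrightarrow> length rs = T \<and>
     (\<forall>t<T. \<bar>rs ! t - ip d x (q (take t rs))\<bar> \<le> \<delta>)"

definition err :: "nat \<Rightarrow> nat \<Rightarrow> real \<Rightarrow> (real list \<Rightarrow> (nat \<Rightarrow> real)) \<Rightarrow> (real list \<Rightarrow> (nat \<Rightarrow> real)) \<Rightarrow> ereal" where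
  "err d T \<delta> q out =
     (SUP x\<in>vecs d. SUP rs\<in>{rs. consistent d T \<delta> q x rs}. ereal (nrm d (out rs - x)))"

definition OPT :: "nat \<Rightarrow> nat \<Rightarrow> real \<Rightarrow> ereal" where
  "OPT d T \<delta> = (INF qo\<in>{(q, out). valid_recon d q out}. err d T \<delta> (fst qo) (snd qo))"

definition OPT_inf :: "nat \<Rightarrow> real \<Rightarrow> ereal" where
  "OPT_inf d \<delta> = lim (\<lambda>T. OPT d T \<delta>)"

definition ExcessErr :: "nat \<Rightarrow> nat \<Rightarrow> real \<Rightarrow> ereal" where
  "ExcessErr d T \<delta> = OPT d T \<delta> - OPT_inf d \<delta>"

end

theory Submission
  imports Defs "HOL-Probability.Hoeffding"
begin

lemma cosh_bound:
  fixes x :: real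
  shows "exp x + exp (-x) \<le> 2 * exp (x^2/2)"
proof -
  have key: "exp y + exp (-y) \<le> 2 * exp (y^2/2)" if "y \<ge> 0" for y :: real
  proof -
    have "-(2*y) * (1/2) + ln (1 + (1/2) * (exp (2*y) - 1)) \<le> (2*y)^2/8"
      by (rule Hoeffdings_lemma_aux) (use that in auto)
    hence "ln ((1 + exp (2*y))/2) \<le> y + y^2/2"
      by (simp add: power2_eq_square field_simps)
    hence "(1 + exp (2*y))/2 \<le> exp (y + y^2/2)"
      by (smt (verit) exp_gt_zero exp_le_cancel_iff exp_ln)
    hence "exp (-y) * ((1 + exp (2*y))/2) \<le> exp (-y) * exp (y + y^2/2)"
      by (intro mult_left_mono) auto
    moreover have "exp (-y) * ((1 + exp (2*y))/2) = (exp y + exp (-y))/2"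
      by (simp add: field_simps flip: exp_add) 
    moreover have "exp (-y) * exp (y + y^2/2) = exp (y^2/2)"
      by (simp flip: exp_add)
    ultimately show ?thesis by simp
  qed
  show ?thesis
  proof (cases "x \<ge> 0")
    case True thus ?thesis using key by blast
  next
    case False thus ?thesis using key[of "-x"] by (simp add: add.commute)
  qed
qed

lemma ip_commute: "ip d x y = ip d y x"
  unfolding ip_def by (simp add: mult.commute)

lemma ip_add_left: "ip d (\<lambda>i. x i + y i) z = ip d x z + ip d y z"
  unfolding ip_def by (simp add: algebra_simps sum.distrib)

lemma ip_diff_left: "ip d (\<lambda>i. x i - y i) z = ip d x z - ip d y z"
  unfolding ip_def by (simp add: algebra_simps sum_subtractf)

lemma ip_scale_left: "ip d (\<lambda>i. c * x i) z = c * ip d x z"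
  unfolding ip_def by (simp add: algebra_simps sum_distrib_left)

lemma ip_add_right: "ip d z (\<lambda>i. x i + y i) = ip d z x + ip d z y"
  unfolding ip_def by (simp add: algebra_simps sum.distrib)

lemma ip_diff_right: "ip d z (\<lambda>i. x i - y i) = ip d z x - ip d z y"
  unfolding ip_def by (simp add: algebra_simps sum_subtractf)

lemma ip_scale_right: "ip d z (\<lambda>i. c * x i) = c * ip d z x"
  unfolding ip_def by (simp add: algebra_simps sum_distrib_left)

lemma ip_fun_diff: "ip d (x - y) z = ip d x z - ip d y z" "ip d z (x - y) = ip d z x - ip d z y"
  using ip_diff_left[of d x y z] ip_diff_right[of d z x y] by (simp_all add: fun_diff_def)

lemma ip_self_nonneg: "ip d x x \<ge> 0"
  unfolding ip_def by (intro sum_nonneg) auto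

lemma nrm_sq: "(nrm d x)^2 = ip d x x"
  unfolding nrm_def using ip_self_nonneg[of d x] by simp

lemma nrm_nonneg: "nrm d x \<ge> 0"
  unfolding nrm_def using ip_self_nonneg[of d x] by simp

lemma nrm_L2: "nrm d x = L2_set x {..<d}"
  unfolding nrm_def ip_def L2_set_def by (simp add: power2_eq_square)

lemma ip_cs: "\<bar>ip d x y\<bar> \<le> nrm d x * nrm d y"
proof -
  have "\<bar>ip d x y\<bar> \<le> (\<Sum>i<d. \<bar>x i\<bar> * \<bar>y i\<bar>)"
    unfolding ip_def by (rule order_trans[OF sum_abs]) (simp add: abs_mult)
  also have "\<dots> \<le> nrm d x * nrm d y"
    unfolding nrm_L2 by (rule L2_set_mult_ineq)
  finally show ?thesis .
qed

lemma ip_zero_left[simp]: "ip d (\<lambda>i. 0) x = 0"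
  unfolding ip_def by simp

lemma ip_zero_right[simp]: "ip d x (\<lambda>i. 0) = 0"
  unfolding ip_def by simp

lemma ip_sum_left: "ip d (\<lambda>i. \<Sum>j\<in>A. p j i) z = (\<Sum>j\<in>A. ip d (p j) z)"
  unfolding ip_def by (simp add: sum_distrib_right sum.swap[of _ A])

lemma ip_sum_right: "ip d z (\<lambda>i. \<Sum>j\<in>A. p j i) = (\<Sum>j\<in>A. ip d z (p j))"
  using ip_sum_left[of d p A z] by (simp add: ip_commute)

lemma vecs_diff: "x \<in> vecs d \<Longrightarrow> y \<in> vecs d \<Longrightarrow> x - y \<in> vecs d"
  unfolding vecs_def by auto

lemma consistent_take:
  assumes "consistent d (Suc T) \<delta> q x rs"
  shows "consistent d T \<delta> q x (take T rs)"
  using assms unfolding consistent_def by (auto simp: min_def)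

lemma err_mono:
  "err d (Suc T) \<delta> q (\<lambda>rs. out (take T rs)) \<le> err d T \<delta> q out"
  unfolding err_def
proof (intro SUP_least)
  fix x rs assume x: "x \<in> vecs d" and rs: "rs \<in> {rs. consistent d (Suc T) \<delta> q x rs}"
  hence "take T rs \<in> {rs. consistent d T \<delta> q x rs}" using consistent_take by auto
  hence "ereal (nrm d (out (take T rs) - x)) \<le> (SUP rs\<in>{rs. consistent d T \<delta> q x rs}. ereal (nrm d (out rs - x)))"
    by (rule SUP_upper)
  also have "\<dots> \<le> (SUP x\<in>vecs d. SUP rs\<in>{rs. consistent d T \<delta> q x rs}. ereal (nrm d (out rs - x)))"
    using x by (rule SUP_upper)
  finally show "ereal (nrm d (out (take T rs) - x)) \<le> \<dots>" .
qed

lemma OPT_mono: "OPT d (Suc T) \<delta> \<le> OPT d T \<delta>"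
  unfolding OPT_def
proof (intro INF_greatest)
  fix qo assume "qo \<in> {(q, out). valid_recon d q out}"
  then obtain q out where qo: "qo = (q, out)" and v: "valid_recon d q out" by auto
  have v': "valid_recon d q (\<lambda>rs. out (take T rs))"
    using v unfolding valid_recon_def by auto
  have "(INF qo\<in>{(q, out). valid_recon d q out}. err d (Suc T) \<delta> (fst qo) (snd qo))
        \<le> err d (Suc T) \<delta> q (\<lambda>rs. out (take T rs))"
    by (rule INF_lower2[of "(q, \<lambda>rs. out (take T rs))"]) (use v' in auto)
  also have "\<dots> \<le> err d T \<delta> q out" by (rule err_mono)
  finally show "(INF qo\<in>{(q, out). valid_recon d q out}. err d (Suc T) \<delta> (fst qo) (snd qo)) \<le> err d T \<delta> (fst qo) (snd qo)"
    using qo by simp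
qed

lemma OPT_inf_eq: "OPT_inf d \<delta> = (INF T. OPT d T \<delta>)"
proof -
  have "decseq (\<lambda>T. OPT d T \<delta>)"
    by (rule decseq_SucI) (rule OPT_mono)
  hence "(\<lambda>T. OPT d T \<delta>) \<longlonglongrightarrow> (INF T. OPT d T \<delta>)" by (rule LIMSEQ_INF)
  thus ?thesis unfolding OPT_inf_def by (rule limI)
qed

lemma OPT_inf_le: "OPT_inf d \<delta> \<le> OPT d T \<delta>"
  unfolding OPT_inf_eq by (rule INF_lower) simp

lemma OPT_inf_ge: "(\<And>T. L \<le> OPT d T \<delta>) \<Longrightarrow> L \<le> OPT_inf d \<delta>"
  unfolding OPT_inf_eq by (rule INF_greatest)

primrec tr :: "((nat \<Rightarrow> real) \<Rightarrow> real) \<Rightarrow> (real list \<Rightarrow> (nat \<Rightarrow> real)) \<Rightarrow> nat \<Rightarrow> real list" where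
  "tr a q 0 = []"
| "tr a q (Suc t) = tr a q t @ [a (q (tr a q t))]"

lemma length_tr[simp]: "length (tr a q t) = t"
  by (induction t) auto

lemma take_tr: "t \<le> T \<Longrightarrow> take t (tr a q T) = tr a q t"
proof (induction T)
  case 0 thus ?case by simp
next
  case (Suc T)
  show ?case
  proof (cases "t = Suc T")
    case True thus ?thesis by simp
  next
    case False
    hence "t \<le> T" using Suc by simp
    thus ?thesis using Suc by simp
  qed
qed

lemma nth_tr: "t < T \<Longrightarrow> tr a q T ! t = a (q (tr a q t))"
proof -
  assume "t < T"
  hence "tr a q T ! t = take (Suc t) (tr a q T) ! t" by simp
  also have "\<dots> = tr a q (Suc t) ! t" using \<open>t < T\<close> by (simp add: take_tr)
  also have "\<dots> = a (q (tr a q t))" by (simp add: nth_append)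
  finally show ?thesis .
qed

lemma err_lower:
  assumes x: "x \<in> vecs d"
    and c: "\<And>t. t < T \<Longrightarrow> \<bar>a (q (tr a q t)) - ip d x (q (tr a q t))\<bar> \<le> \<delta>"
  shows "ereal (nrm d (out (tr a q T) - x)) \<le> err d T \<delta> q out"
proof -
  have "consistent d T \<delta> q x (tr a q T)"
    unfolding consistent_def using c by (auto simp: nth_tr take_tr)
  hence "ereal (nrm d (out (tr a q T) - x)) \<le> (SUP rs\<in>{rs. consistent d T \<delta> q x rs}. ereal (nrm d (out rs - x)))"
    by (intro SUP_upper) auto
  also have "\<dots> \<le> err d T \<delta> q out"
    unfolding err_def using x by (rule SUP_upper)
  finally show ?thesis .
qed

lemma OPT_lower:
  assumes "\<And>q out. valid_recon d q out \<Longrightarrow> L \<le> err d T \<delta> q out"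
  shows "L \<le> OPT d T \<delta>"
  unfolding OPT_def using assms by (intro INF_greatest) auto

lemma OPT_upper:
  assumes "valid_recon d q out"
  shows "OPT d T \<delta> \<le> err d T \<delta> q out"
  unfolding OPT_def using assms by (intro INF_lower2[of "(q, out)"]) auto

lemma err_upper:
  assumes "\<And>x rs. x \<in> vecs d \<Longrightarrow> consistent d T \<delta> q x rs \<Longrightarrow> nrm d (out rs - x) \<le> B"
  shows "err d T \<delta> q out \<le> ereal B"
  unfolding err_def using assms by (intro SUP_least) auto

definition simp_pt :: "real \<Rightarrow> nat \<Rightarrow> (nat \<Rightarrow> real)" where
  "simp_pt \<delta> i = (\<lambda>j. if j = i then sqrt 2 * \<delta> else 0)"

lemma ip_simp_pt: "i < d \<Longrightarrow> ip d (simp_pt \<delta> i) v = sqrt 2 * \<delta> * v i"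
proof -
  assume i: "i < d"
  have "(\<Sum>j<d. simp_pt \<delta> i j * v j) = (\<Sum>j<d. if j = i then sqrt 2 * \<delta> * v i else 0)"
    by (rule sum.cong) (auto simp: simp_pt_def)
  thus ?thesis unfolding ip_def using i by simp
qed

lemma simp_pt_vecs: "i < d \<Longrightarrow> simp_pt \<delta> i \<in> vecs d"
  unfolding vecs_def simp_pt_def by auto

lemma aux_lin: "(a::real) + b = 2*c \<Longrightarrow> c \<le> 1 \<Longrightarrow> 0 \<le> b \<Longrightarrow> a \<le> 2"
  by linarith

lemma spread_le:
  assumes v: "v \<in> usphere d" and j: "j < d" and k: "k < d"
  shows "v j - v k \<le> sqrt 2"
proof (cases "j = k")
  case True thus ?thesis by simp
next
  case False
  have "v j ^ 2 + v k ^ 2 = (\<Sum>i\<in>{j,k}. v i * v i)"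
    using False by (simp add: power2_eq_square)
  also have "\<dots> \<le> (\<Sum>i<d. v i * v i)"
    by (rule sum_mono2) (use j k in auto)
  also have "\<dots> = 1" using v unfolding usphere_def ip_def by simp
  finally have le1: "v j ^ 2 + v k ^ 2 \<le> 1" .
  have "(v j - v k)^2 + (v j + v k)^2 = 2*(v j^2 + v k^2)"
    by (simp add: power2_eq_square algebra_simps)
  from aux_lin[OF this le1 zero_le_power2[of "v j + v k"]] have "(v j - v k)^2 \<le> 2" .
  thus ?thesis
    by (metis abs_le_D1 real_sqrt_abs real_sqrt_le_mono)
qed

definition simp_ans :: "nat \<Rightarrow> real \<Rightarrow> (nat \<Rightarrow> real) \<Rightarrow> real" where
  "simp_ans d \<delta> v = sqrt 2 * \<delta> * (Max (v ` {..<d}) + Min (v ` {..<d})) / 2"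

lemma simp_ans_ok:
  assumes v: "v \<in> usphere d" and i: "i < d" and \<delta>: "\<delta> > 0"
  shows "\<bar>simp_ans d \<delta> v - ip d (simp_pt \<delta> i) v\<bar> \<le> \<delta>"
proof -
  define M where "M = Max (v ` {..<d})"
  define m where "m = Min (v ` {..<d})"
  have ne: "v ` {..<d} \<noteq> {}" using i by auto
  have "M \<in> v ` {..<d}" unfolding M_def using ne by (intro Max_in) auto
  then obtain j where j: "j < d" "M = v j" by auto
  have "m \<in> v ` {..<d}" unfolding m_def using ne by (intro Min_in) auto
  then obtain k where k: "k < d" "m = v k" by auto
  have "M - m \<le> sqrt 2" using spread_le[OF v j(1) k(1)] j k by simp
  have "v i \<le> M" unfolding M_def using i by (intro Max_ge) auto
  have "m \<le> v i" unfolding m_def using i by (intro Min_le) auto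
  have eq: "simp_ans d \<delta> v - ip d (simp_pt \<delta> i) v = sqrt 2 * \<delta> * ((M + m)/2 - v i)"
    unfolding simp_ans_def ip_simp_pt[OF i] M_def m_def by (simp add: algebra_simps)
  have "\<bar>(M + m)/2 - v i\<bar> \<le> (M - m)/2" using \<open>v i \<le> M\<close> \<open>m \<le> v i\<close> by (simp add: abs_le_iff field_simps)
  also have "\<dots> \<le> sqrt 2 / 2" using \<open>M - m \<le> sqrt 2\<close> by simp
  finally have "sqrt 2 * \<delta> * \<bar>(M + m)/2 - v i\<bar> \<le> sqrt 2 * \<delta> * (sqrt 2 / 2)"
    using \<delta> by (intro mult_left_mono) auto
  also have "\<dots> = \<delta>" by simp
  finally show ?thesis unfolding eq using \<delta> by (simp add: abs_mult)
qed

lemma simplex_far: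
  assumes d: "d \<ge> 1" and c: "c \<in> vecs d"
  shows "\<exists>i<d. 2 * \<delta>^2 * (1 - 1/d) \<le> ip d (c - simp_pt \<delta> i) (c - simp_pt \<delta> i)"
proof (rule ccontr)
  assume "\<not> ?thesis"
  hence lt: "\<And>i. i < d \<Longrightarrow> ip d (c - simp_pt \<delta> i) (c - simp_pt \<delta> i) < 2 * \<delta>^2 * (1 - 1/d)"
    by auto
  define s where "s = (\<Sum>i<d. c i)"
  have each: "ip d (c - simp_pt \<delta> i) (c - simp_pt \<delta> i) = ip d c c - 2 * sqrt 2 * \<delta> * c i + 2 * \<delta>^2"
    if "i < d" for i
  proof -
    have "ip d (c - simp_pt \<delta> i) (c - simp_pt \<delta> i) = ip d c c - 2 * ip d (simp_pt \<delta> i) c + ip d (simp_pt \<delta> i) (simp_pt \<delta> i)"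
      unfolding ip_fun_diff ip_commute[of d c "simp_pt \<delta> i"] by simp
    also have "ip d (simp_pt \<delta> i) (simp_pt \<delta> i) = 2 * \<delta>^2"
      unfolding ip_simp_pt[OF that] by (simp add: simp_pt_def power2_eq_square)
    finally show ?thesis using that by (simp add: ip_simp_pt fun_diff_def)
  qed
  have "(\<Sum>i<d. ip d (c - simp_pt \<delta> i) (c - simp_pt \<delta> i)) = d * ip d c c - 2 * sqrt 2 * \<delta> * s + real d * 2 * \<delta>^2"
    using each by (simp add: s_def sum.distrib sum_subtractf sum_distrib_left)
  moreover have "s^2 \<le> d * ip d c c"
  proof -
    have "\<bar>ip d c (\<lambda>_. 1)\<bar> \<le> nrm d c * nrm d (\<lambda>_. 1)" by (rule ip_cs)
    hence "(ip d c (\<lambda>_. 1))^2 \<le> (nrm d c)^2 * (nrm d (\<lambda>_. 1))^2"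
      by (metis abs_ge_zero power2_abs power_mono power_mult_distrib)
    moreover have "ip d c (\<lambda>_. 1) = s" unfolding ip_def s_def by simp
    moreover have "(nrm d (\<lambda>_. 1))^2 = d" unfolding nrm_sq ip_def by simp
    ultimately show ?thesis by (simp add: nrm_sq mult.commute)
  qed
  moreover have "(s - sqrt 2 * \<delta>)^2 = s^2 - 2 * sqrt 2 * \<delta> * s + 2 * \<delta>^2"
    by (simp add: power2_diff power_mult_distrib)
  moreover have "real d * 2 * \<delta>^2 = 2 * (real d - 1) * \<delta>^2 + 2 * \<delta>^2"
    by (simp add: algebra_simps)
  ultimately have ge: "(\<Sum>i<d. ip d (c - simp_pt \<delta> i) (c - simp_pt \<delta> i)) \<ge> 2 * (real d - 1) * \<delta>^2"
    using zero_le_power2[of "s - sqrt 2 * \<delta>"] by linarith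
  have "(\<Sum>i<d. ip d (c - simp_pt \<delta> i) (c - simp_pt \<delta> i)) < (\<Sum>i<(d::nat). 2 * \<delta>^2 * (1 - 1/d))"
    using d lt by (intro sum_strict_mono) (auto simp: lessThan_empty_iff)
  also have "\<dots> = 2 * (real d - 1) * \<delta>^2" using d by (simp add: field_simps)
  finally show False using ge by simp
qed

lemma OPT_simplex_lower:
  assumes d: "d \<ge> 1" and \<delta>: "\<delta> > 0"
  shows "ereal (sqrt (2 * \<delta>^2 * (1 - 1/d))) \<le> OPT d T \<delta>"
proof (rule OPT_lower)
  fix q out assume v: "valid_recon d q out"
  define c where "c = out (tr (simp_ans d \<delta>) q T)"
  have c: "c \<in> vecs d" using v unfolding valid_recon_def c_def by auto
  obtain i where i: "i < d" and far: "2 * \<delta>^2 * (1 - 1/d) \<le> ip d (c - simp_pt \<delta> i) (c - simp_pt \<delta> i)"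
    using simplex_far[OF d c] by blast
  have "sqrt (2 * \<delta>^2 * (1 - 1/d)) \<le> nrm d (c - simp_pt \<delta> i)"
    unfolding nrm_def using far by simp
  also have "ereal (nrm d (c - simp_pt \<delta> i)) \<le> err d T \<delta> q out"
    unfolding c_def
  proof (rule err_lower)
    show "simp_pt \<delta> i \<in> vecs d" using i by (rule simp_pt_vecs)
    fix t
    have "q (tr (simp_ans d \<delta>) q t) \<in> usphere d" using v unfolding valid_recon_def by auto
    thus "\<bar>simp_ans d \<delta> (q (tr (simp_ans d \<delta>) q t)) - ip d (simp_pt \<delta> i) (q (tr (simp_ans d \<delta>) q t))\<bar> \<le> \<delta>"
      by (rule simp_ans_ok[OF _ i \<delta>])
  qed
  finally show "ereal (sqrt (2 * \<delta>^2 * (1 - 1/d))) \<le> err d T \<delta> q out" by simp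
qed

primrec bcS :: "((nat \<Rightarrow> real) \<Rightarrow> (nat \<Rightarrow> real)) \<Rightarrow> nat \<Rightarrow> nat \<Rightarrow> real" where
  "bcS f 0 = (\<lambda>i. 0)"
| "bcS f (Suc n) = (\<lambda>i. bcS f n i + f (\<lambda>k. bcS f n k / real n) i)"

lemma sqrt_step: "1 / (real n + 1) \<le> 2 * (sqrt (real n + 1) - sqrt (real n))"
proof -
  define a where "a = sqrt (real n + 1)"
  define b where "b = sqrt (real n)"
  have ab: "a * a = real n + 1" "b * b = real n" "a \<ge> 0" "b \<ge> 0" "b \<le> a"
    unfolding a_def b_def by auto
  have a1: "a \<ge> 1" unfolding a_def by simp
  have "a \<le> real n + 1" using ab a1 by (metis mult_le_cancel_left1 order_less_le_trans zero_less_one not_le)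
  have "(a - b) * (a + b) = 1" using ab by (simp add: algebra_simps)
  moreover have "a + b \<le> 2 * real n + 2" using ab \<open>a \<le> real n + 1\<close> by linarith
  ultimately have "1 \<le> (a - b) * (2 * real n + 2)"
    by (metis ab(5) diff_ge_0_iff_ge mult_left_mono)
  thus ?thesis unfolding a_def[symmetric] b_def[symmetric] by (simp add: field_simps)
qed

lemma jung_lite:
  assumes Kv: "K \<subseteq> vecs d" and Kne: "K \<noteq> {}"
    and diam: "\<And>x y. x \<in> K \<Longrightarrow> y \<in> K \<Longrightarrow> ip d (x - y) (x - y) \<le> D2"
    and \<eta>: "\<eta> > 0"
  shows "\<exists>c\<in>vecs d. \<forall>x\<in>K. ip d (x - c) (x - c) \<le> D2 / 2 + \<eta>"
proof (rule ccontr)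
  define A where "A = D2 / 2 + \<eta>"
  assume "\<not> ?thesis"
  hence H: "\<And>c. c \<in> vecs d \<Longrightarrow> \<exists>x\<in>K. ip d (x - c) (x - c) > A"
    unfolding A_def by (auto simp: not_le)
  obtain x0 where x0: "x0 \<in> K" using Kne by auto
  have D2: "D2 \<ge> 0" using diam[OF x0 x0] by (simp add: ip_def)
  have A: "A > 0" unfolding A_def using D2 \<eta> by simp
  define f where "f = (\<lambda>c. SOME x. x \<in> K \<and> (c \<in> vecs d \<longrightarrow> ip d (x - c) (x - c) > A))"
  have f: "f c \<in> K \<and> (c \<in> vecs d \<longrightarrow> ip d (f c - c) (f c - c) > A)" for c
  proof -
    have "\<exists>x. x \<in> K \<and> (c \<in> vecs d \<longrightarrow> ip d (x - c) (x - c) > A)"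
      using H x0 by blast
    thus ?thesis unfolding f_def by (rule someI_ex)
  qed
  define S where "S = bcS f"
  define cen where "cen = (\<lambda>n k. S n k / real n)"
  define p where "p = (\<lambda>n. f (cen n))"
  have S_Suc: "S (Suc n) = (\<lambda>i. S n i + p n i)" for n
    unfolding S_def p_def cen_def by simp
  have S_sum: "S n i = (\<Sum>j<n. p j i)" for n i
    by (induction n) (auto simp: S_def p_def cen_def)
  have pK: "p n \<in> K" for n unfolding p_def using f by blast
  have pv: "p n \<in> vecs d" for n using pK Kv by blast
  have cenv: "cen n \<in> vecs d" for n
    using pv unfolding cen_def vecs_def S_sum by auto
  have far: "ip d (p n - cen n) (p n - cen n) > A" for n
    unfolding p_def using f cenv by blast
  define Q where "Q = (\<lambda>n. \<Sum>j<n. ip d (p j) (p j))"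
  define \<Phi> where "\<Phi> = (\<lambda>n. Q n - ip d (S n) (S n) / real n)"
  have rec: "\<Phi> (Suc n) = \<Phi> n + real n / (real n + 1) * ip d (p n - cen n) (p n - cen n)" if n: "n \<ge> 1" for n
  proof -
    define a where "a = ip d (p n) (p n)"
    define b where "b = ip d (S n) (p n)"
    define e where "e = ip d (S n) (S n)"
    have npos: "real n > 0" using n by simp
    have 1: "ip d (S (Suc n)) (S (Suc n)) = e + 2 * b + a"
      unfolding S_Suc ip_add_left ip_add_right a_def b_def e_def by (simp add: ip_commute)
    have cc: "cen n = (\<lambda>k. (1 / real n) * S n k)" unfolding cen_def by simp
    have "ip d (p n - cen n) (p n - cen n) = a - (1 / real n) * b - ((1 / real n) * b - (1 / real n) * ((1 / real n) * e))"
      unfolding ip_fun_diff cc ip_scale_left ip_scale_right a_def b_def e_def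
      using npos by (simp add: ip_commute field_simps)
    also have "\<dots> = a - 2 * b / n + e / n^2"
      using npos by (simp add: power2_eq_square divide_simps algebra_simps)
    finally have 2: "ip d (p n - cen n) (p n - cen n) = a - 2 * b / n + e / n^2" .
    have 3: "Q (Suc n) = Q n + a" unfolding Q_def a_def by simp
    have 4: "\<Phi> (Suc n) = Q n + a - (e + 2 * b + a) / (real n + 1)"
      unfolding \<Phi>_def 3 1 by simp
    have 5: "\<Phi> n = Q n - e / real n" unfolding \<Phi>_def e_def ..
    have "Q n + a - (e + 2 * b + a) / (real n + 1) = Q n - e / real n + real n / (real n + 1) * (a - 2 * b / n + e / n^2)"
      using npos by (simp add: divide_simps power2_eq_square add_pos_pos) (simp add: algebra_simps)
    thus ?thesis unfolding 4 5 2 .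
  qed
  have \<Phi>1: "\<Phi> 1 = 0"
  proof -
    have "S 1 = p 0" by (rule ext) (simp add: S_sum)
    thus ?thesis unfolding \<Phi>_def Q_def by simp
  qed
  have upper: "\<Phi> n \<le> real n * D2 / 2" if n: "n \<ge> 1" for n
  proof -
    have "(\<Sum>i<n. \<Sum>j<n. ip d (p i - p j) (p i - p j)) = 2 * real n * Q n - 2 * ip d (S n) (S n)"
    proof -
      have Sn: "S n = (\<lambda>k. \<Sum>j<n. p j k)" using S_sum by auto
      have "ip d (S n) (S n) = (\<Sum>i<n. \<Sum>j<n. ip d (p i) (p j))"
        unfolding Sn ip_sum_left ip_sum_right ..
      moreover have "(\<Sum>i<n. \<Sum>j<n. ip d (p i - p j) (p i - p j))
          = (\<Sum>i<n. \<Sum>j<n. ip d (p i) (p i) + ip d (p j) (p j) - 2 * ip d (p i) (p j))"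
        by (intro sum.cong refl) (simp add: ip_fun_diff ip_commute algebra_simps)
      moreover have "(\<Sum>i<n. \<Sum>j<n. ip d (p i) (p i) + ip d (p j) (p j) - 2 * ip d (p i) (p j))
          = (\<Sum>i<n. real n * ip d (p i) (p i) + Q n - 2 * (\<Sum>j<n. ip d (p i) (p j)))"
        unfolding Q_def by (intro sum.cong refl) (simp add: sum.distrib sum_subtractf sum_distrib_left)
      moreover have "(\<Sum>i<n. real n * ip d (p i) (p i) + Q n - 2 * (\<Sum>j<n. ip d (p i) (p j)))
          = real n * Q n + real n * Q n - 2 * (\<Sum>i<n. \<Sum>j<n. ip d (p i) (p j))"
        unfolding Q_def by (simp add: sum.distrib sum_subtractf sum_distrib_left)
      ultimately show ?thesis by simp
    qed
    moreover have "(\<Sum>i<n. \<Sum>j<n. ip d (p i - p j) (p i - p j)) \<le> (\<Sum>i<n. \<Sum>j<n. D2)"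
      by (intro sum_mono diam pK)
    ultimately have "2 * real n * Q n - 2 * ip d (S n) (S n) \<le> real n * real n * D2" by simp
    thus ?thesis unfolding \<Phi>_def using n by (simp add: field_simps)
  qed
  have lower: "\<Phi> n \<ge> A * (real n - 2 * sqrt (real n))" if n: "n \<ge> 1" for n
    using n
  proof (induction n rule: dec_induct)
    case base thus ?case using \<Phi>1 A by simp
  next
    case (step n)
    have "A * (real (Suc n) - 2 * sqrt (real (Suc n)))
        = A * (real n - 2 * sqrt (real n)) + A * (1 - 2 * (sqrt (real n + 1) - sqrt (real n)))"
      by (simp add: algebra_simps)
    also have "A * (1 - 2 * (sqrt (real n + 1) - sqrt (real n))) \<le> A * (real n / (real n + 1))"
    proof -
      have "1 - 2 * (sqrt (real n + 1) - sqrt (real n)) \<le> 1 - 1 / (real n + 1)"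
        using sqrt_step[of n] by simp
      also have "\<dots> = real n / (real n + 1)" by (simp add: field_simps)
      finally show ?thesis using A by (intro mult_left_mono) auto
    qed
    also have "A * (real n / (real n + 1)) \<le> real n / (real n + 1) * ip d (p n - cen n) (p n - cen n)"
      using mult_right_mono[OF less_imp_le[OF far[of n]], of "real n / (real n + 1)"] by (simp add: mult.commute)
    finally show ?case using rec[OF step(1)] step(3) by linarith
  qed
  obtain n :: nat where nbig: "real n > (2 * A / \<eta>)^2 + 1" using reals_Archimedean2 by blast
  have "(2 * A / \<eta>)^2 \<ge> 0" by simp
  hence "real n > 1" using nbig by linarith
  hence n1: "n \<ge> 1" by simp
  have "A * (real n - 2 * sqrt (real n)) \<le> real n * D2 / 2"
    using lower[OF n1] upper[OF n1] by linarith
  hence le: "\<eta> * real n \<le> 2 * A * sqrt (real n)" unfolding A_def by (simp add: algebra_simps)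
  define r where "r = sqrt (real n)"
  have r: "r > 0" unfolding r_def using n1 by simp
  have nr: "real n = r * r" unfolding r_def by simp
  have "(\<eta> * r) * r \<le> (2 * A) * r" using le unfolding nr r_def[symmetric] using r by (simp add: mult.assoc)
  hence "\<eta> * r \<le> 2 * A" using r by (rule mult_right_le_imp_le)
  hence "r \<le> 2 * A / \<eta>" using \<eta> by (simp add: pos_le_divide_eq mult.commute)
  hence "r^2 \<le> (2 * A / \<eta>)^2" using r by (intro power_mono) auto
  hence "r * r \<le> (2 * A / \<eta>)^2" by (simp add: power2_eq_square)
  hence "real n \<le> (2 * A / \<eta>)^2" unfolding nr .
  thus False using nbig by simp
qed

lemma ip_vecs_sum: "ip d x x = (\<Sum>i<d. (x i)^2)"
  unfolding ip_def by (simp add: power2_eq_square)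

lemma alg_id:
  fixes s M L :: real
  assumes "s > 0" "M > 0" "L > 0"
  shows "(2 * M - 1) * L * ((M + 1/2) * s) = (2 * M + 1) * ((M^2 * (s * s) - M * (s * s) / 2) / (M * s / L))"
  using assms by (simp add: field_simps power2_eq_square)

lemma norming_core:
  fixes m :: nat
  assumes m: "m \<ge> 1" and z: "z \<in> vecs d" and L: "nrm d z > 0"
  shows "\<exists>g :: nat \<Rightarrow> int. (\<forall>i\<ge>d. g i = 0)
           \<and> ip d (\<lambda>i. real_of_int (g i)) (\<lambda>i. real_of_int (g i)) \<le> (real m + 1/2)^2 * real d
           \<and> ip d (\<lambda>i. real_of_int (g i)) (\<lambda>i. real_of_int (g i)) > 0
           \<and> (2 * real m - 1) * nrm d z * nrm d (\<lambda>i. real_of_int (g i)) \<le> (2 * real m + 1) * ip d z (\<lambda>i. real_of_int (g i))"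
proof -
  define Lz where "Lz = nrm d z"
  have d: "d > 0"
  proof (rule ccontr)
    assume "\<not> d > 0" hence "d = 0" by simp
    thus False using L unfolding nrm_def ip_def by simp
  qed
  define t where "t = real m * sqrt (real d) / Lz"
  have t: "t > 0" unfolding t_def Lz_def using L m d by simp
  define y where "y = (\<lambda>i. t * z i)"
  define g where "g = (\<lambda>i. round (y i))"
  define gr where "gr = (\<lambda>i. real_of_int (g i))"
  define e where "e = (\<lambda>i. gr i - y i)"
  have g0: "\<forall>i\<ge>d. g i = 0" using z unfolding g_def y_def vecs_def by auto
  have ei: "\<bar>e i\<bar> \<le> 1/2" for i unfolding e_def gr_def g_def by (rule of_int_round_abs_le)
  have ee: "ip d e e \<le> real d / 4"
  proof -
    have "ip d e e = (\<Sum>i<d. (e i)^2)" by (rule ip_vecs_sum)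
    also have "\<dots> \<le> (\<Sum>i<d. 1/4)"
    proof (intro sum_mono)
      fix i
      have "(e i)^2 = \<bar>e i\<bar>^2" by simp
      also have "\<dots> \<le> (1/2)^2" using ei[of i] by (intro power_mono) auto
      finally show "(e i)^2 \<le> 1/4" by (simp add: power2_eq_square)
    qed
    finally show ?thesis by simp
  qed
  have ne: "nrm d e \<le> sqrt (real d) / 2"
  proof -
    have "nrm d e \<le> sqrt (real d / 4)" unfolding nrm_def using ee by simp
    also have "sqrt (real d / 4) = sqrt (real d) / 2" by (simp add: real_sqrt_divide)
    finally show ?thesis .
  qed
  have yy: "ip d y y = (real m)^2 * real d"
  proof -
    have "ip d y y = t^2 * ip d z z" unfolding y_def ip_scale_left ip_scale_right by (simp add: power2_eq_square)
    also have "ip d z z = Lz^2" unfolding Lz_def nrm_sq ..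
    also have "t^2 * Lz^2 = (real m)^2 * real d" unfolding t_def using L Lz_def
      by (simp add: power_divide power_mult_distrib)
    finally show ?thesis .
  qed
  have ny: "nrm d y = real m * sqrt (real d)"
    unfolding nrm_def yy by (simp add: real_sqrt_mult)
  have grye: "gr = (\<lambda>i. y i + e i)" unfolding e_def by auto
  have cs: "\<bar>ip d y e\<bar> \<le> real m * sqrt (real d) * (sqrt (real d) / 2)"
    using ip_cs[of d y e] ny ne
    by (metis (no_types, opaque_lifting) mult_left_mono nrm_nonneg order_trans)
  have sd: "sqrt (real d) * sqrt (real d) = real d" by simp
  have gg: "ip d gr gr = ip d y y + 2 * ip d y e + ip d e e"
    unfolding grye ip_add_left ip_add_right by (simp add: ip_commute)
  have gg_le: "ip d gr gr \<le> (real m + 1/2)^2 * real d"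
  proof -
    have "ip d y e \<le> real m * real d / 2" using cs sd by (simp add: abs_le_iff mult.assoc)
    hence "ip d gr gr \<le> (real m)^2 * real d + real m * real d + real d / 4"
      using gg yy ee by linarith
    also have "\<dots> = (real m + 1/2)^2 * real d" by (simp add: power2_eq_square algebra_simps)
    finally show ?thesis .
  qed
  have yg: "ip d y gr \<ge> (real m)^2 * real d - real m * real d / 2"
  proof -
    have "ip d y gr = ip d y y + ip d y e" unfolding grye ip_add_right ..
    moreover have "- ip d y e \<le> real m * real d / 2" using cs sd by (simp add: abs_le_iff mult.assoc)
    ultimately show ?thesis using yy by linarith
  qed
  have mpos: "(real m)^2 * real d - real m * real d / 2 > 0"
  proof -
    have "(real m)^2 * real d - real m * real d / 2 = real m * real d * (real m - 1/2)"
      by (simp add: power2_eq_square algebra_simps)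
    moreover have "real m * real d * (real m - 1/2) > 0" using m d by simp
    ultimately show ?thesis by simp
  qed
  have ngr: "nrm d gr \<le> (real m + 1/2) * sqrt (real d)"
  proof -
    have "nrm d gr \<le> sqrt ((real m + 1/2)^2 * real d)" unfolding nrm_def using gg_le by simp
    also have "\<dots> = (real m + 1/2) * sqrt (real d)" by (simp add: real_sqrt_mult)
    finally show ?thesis .
  qed
  have ggpos: "ip d gr gr > 0"
  proof (rule ccontr)
    assume "\<not> ip d gr gr > 0"
    hence "ip d gr gr = 0" using ip_self_nonneg[of d gr] by simp
    hence "nrm d gr = 0" unfolding nrm_def by simp
    hence "ip d y gr = 0" using ip_cs[of d y gr] by simp
    thus False using yg mpos by simp
  qed
  have zg: "ip d z gr = ip d y gr / t"
    unfolding y_def ip_scale_left using t by simp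
  have main: "(2 * real m - 1) * Lz * nrm d gr \<le> (2 * real m + 1) * ip d z gr"
  proof -
    have "(2 * real m - 1) * Lz * nrm d gr \<le> (2 * real m - 1) * Lz * ((real m + 1/2) * sqrt (real d))"
      using ngr m L Lz_def by (intro mult_left_mono) auto
    also have "\<dots> = (2 * real m + 1) * (((real m)^2 * real d - real m * real d / 2) / t)"
      using alg_id[of "sqrt (real d)" "real m" Lz] L Lz_def d m unfolding t_def sd by simp
    also have "\<dots> \<le> (2 * real m + 1) * (ip d y gr / t)"
      using yg t by (intro mult_left_mono divide_right_mono) auto
    also have "\<dots> = (2 * real m + 1) * ip d z gr" using zg by simp
    finally show ?thesis .
  qed
  show ?thesis
    using g0 gg_le ggpos main unfolding gr_def Lz_def by blast
qed

definition latt :: "nat \<Rightarrow> nat \<Rightarrow> (nat \<Rightarrow> int) set" where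
  "latt d B = {g. (\<forall>i\<ge>d. g i = 0) \<and> (\<Sum>i<d. (g i)^2) \<le> int B}"

lemma half_sum_nat: "(\<Sum>k\<in>{0..int B}. (1/2::real) ^ nat \<bar>k\<bar>) < 2"
proof -
  have "(\<Sum>k\<in>{0..int B}. (1/2::real) ^ nat \<bar>k\<bar>) = (\<Sum>k\<in>int ` {0..B}. (1/2::real) ^ nat \<bar>k\<bar>)"
    by (simp add: image_int_atLeastAtMost)
  also have "\<dots> = (\<Sum>j\<in>{0..B}. (1/2::real) ^ j)"
    by (subst sum.reindex) (auto simp: inj_on_def)
  also have "\<dots> < 1 / (1 - 1/2)" by (rule geometric_sum_less) auto
  finally show ?thesis by simp
qed

lemma int_abs_le_sq: "\<bar>k::int\<bar> \<le> k^2"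
proof (cases "k = 0")
  case False hence "1 \<le> \<bar>k\<bar>" by simp
  hence "\<bar>k\<bar> * 1 \<le> \<bar>k\<bar> * \<bar>k\<bar>" by (intro mult_left_mono) auto
  thus ?thesis by (simp add: power2_eq_square abs_mult_self)
qed simp

lemma theta_le: "(\<Sum>k\<in>{-int B..int B}. (1/2::real) ^ nat (k^2)) \<le> 4"
proof -
  define fa where "fa = (\<lambda>k::int. (1/2::real) ^ nat \<bar>k\<bar>)"
  have s1: "(\<Sum>k\<in>{-int B..int B}. (1/2::real) ^ nat (k^2)) \<le> (\<Sum>k\<in>{-int B..int B}. fa k)"
    unfolding fa_def
  proof (intro sum_mono power_decreasing)
    fix k :: int
    have "\<bar>k\<bar> \<le> k^2" by (rule int_abs_le_sq)
    thus "nat \<bar>k\<bar> \<le> nat (k^2)" by simp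
  qed auto
  have s2: "{-int B..int B} = {0..int B} \<union> {-int B..0}" by auto
  have s3: "(\<Sum>k\<in>{0..int B} \<union> {-int B..0}. fa k) \<le> (\<Sum>k\<in>{0..int B}. fa k) + (\<Sum>k\<in>{-int B..0}. fa k)"
  proof -
    have "(\<Sum>k\<in>{0..int B} \<inter> {-int B..0}. fa k) \<ge> 0" unfolding fa_def by (intro sum_nonneg) auto
    thus ?thesis by (subst sum_Un) auto
  qed
  have s4: "(\<Sum>k\<in>{-int B..0}. fa k) = (\<Sum>k\<in>{0..int B}. fa k)"
  proof -
    have "{-int B..0} = uminus ` {0..int B}" by simp
    hence "(\<Sum>k\<in>{-int B..0}. fa k) = (\<Sum>k\<in>uminus ` {0..int B}. fa k)" by simp
    also have "\<dots> = (\<Sum>k\<in>{0..int B}. fa k)"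
      by (subst sum.reindex) (auto simp: inj_on_def fa_def)
    finally show ?thesis .
  qed
  have s5: "(\<Sum>k\<in>{0..int B}. fa k) < 2" unfolding fa_def by (rule half_sum_nat)
  have "(\<Sum>k\<in>{-int B..int B}. fa k) \<le> (\<Sum>k\<in>{0..int B}. fa k) + (\<Sum>k\<in>{-int B..0}. fa k)"
    using s3 by (simp only: s2)
  thus ?thesis using s1 s4 s5 by linarith
qed

lemma latt_card:
  shows "finite (latt d B) \<and> real (card (latt d B)) \<le> 2 ^ B * 4 ^ d"
proof -
  define P where "P = PiE {..<d} (\<lambda>_. {-int B..int B})"
  define G' where "G' = {h\<in>P. (\<Sum>i<d. (h i)^2) \<le> int B}"
  define ext where "ext = (\<lambda>h i. if i < d then h i else (0::int))"
  have finP: "finite P" unfolding P_def by (intro finite_PiE) auto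
  have finG': "finite G'" unfolding G'_def using finP by simp
  have sub: "latt d B \<subseteq> ext ` G'"
  proof
    fix g assume g: "g \<in> latt d B"
    have gb: "\<bar>g i\<bar> \<le> int B" if "i < d" for i
    proof -
      have "\<bar>g i\<bar> \<le> (g i)^2" by (rule int_abs_le_sq)
      also have "(g i)^2 \<le> (\<Sum>i<d. (g i)^2)"
        by (rule member_le_sum) (use that in auto)
      also have "\<dots> \<le> int B" using g unfolding latt_def by auto
      finally show ?thesis .
    qed
    have gb': "g i \<in> {-int B..int B}" if "i < d" for i
      using gb[OF that] unfolding atLeastAtMost_iff by arith
    have "restrict g {..<d} \<in> G'"
      unfolding G'_def P_def using g gb' unfolding latt_def by auto
    moreover have "g = ext (restrict g {..<d})"
      using g unfolding ext_def latt_def by (auto simp: fun_eq_iff)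
    ultimately show "g \<in> ext ` G'" by blast
  qed
  have fin: "finite (latt d B)" using sub finG' finite_subset by blast
  have "card (latt d B) \<le> card (ext ` G')" by (rule card_mono) (use sub finG' in auto)
  also have "\<dots> \<le> card G'" using finG' by (rule card_image_le)
  finally have c1: "real (card (latt d B)) \<le> real (card G')" by simp
  define W where "W = (\<lambda>h. \<Prod>i<d. (1/2::real) ^ nat ((h i)^2))"
  have W1: "1 \<le> 2 ^ B * W h" if "h \<in> G'" for h
  proof -
    have "W h = (1/2::real) ^ (\<Sum>i<d. nat ((h i)^2))" unfolding W_def by (simp add: power_sum)
    moreover have "(\<Sum>i<d. nat ((h i)^2)) \<le> B"
    proof -
      have eq: "int (\<Sum>i<d. nat ((h i)^2)) = (\<Sum>i<d. (h i)^2)" by simp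
      have "(\<Sum>i<d. (h i)^2) \<le> int B" using that unfolding G'_def by simp
      hence "int (\<Sum>i<d. nat ((h i)^2)) \<le> int B" using eq by linarith
      thus ?thesis by (simp only: of_nat_le_iff)
    qed
    ultimately have "W h \<ge> (1/2::real) ^ B" by (simp add: power_decreasing)
    hence "2 ^ B * W h \<ge> 2 ^ B * (1/2::real) ^ B" by (intro mult_left_mono) auto
    thus ?thesis by (simp add: power_one_over[symmetric] flip: power_mult_distrib)
  qed
  have Wnn: "W h \<ge> 0" for h unfolding W_def by (intro prod_nonneg) auto
  have "real (card G') = (\<Sum>h\<in>G'. 1)" by simp
  also have "\<dots> \<le> (\<Sum>h\<in>G'. 2 ^ B * W h)" by (intro sum_mono W1)
  also have "\<dots> \<le> (\<Sum>h\<in>P. 2 ^ B * W h)"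
    by (rule sum_mono2) (use finP Wnn in \<open>auto simp: G'_def\<close>)
  also have "\<dots> = 2 ^ B * (\<Sum>h\<in>P. W h)" by (simp add: sum_distrib_left)
  also have "(\<Sum>h\<in>P. W h) = (\<Prod>i<d. \<Sum>k\<in>{-int B..int B}. (1/2::real) ^ nat (k^2))"
    unfolding W_def P_def by (rule prod_sum_PiE[symmetric]) auto
  also have "\<dots> = (\<Sum>k\<in>{-int B..int B}. (1/2::real) ^ nat (k^2)) ^ d" by simp
  also have "\<dots> \<le> 4 ^ d" by (intro power_mono theta_le) (auto intro: sum_nonneg)
  finally show ?thesis using fin c1 by (simp add: mult_left_mono)
qed

lemma net_exists:
  fixes m d :: nat
  assumes m: "m \<ge> 1" and d: "d \<ge> 1"
  shows "\<exists>N. finite N \<and> N \<noteq> {} \<and> N \<subseteq> usphere d \<and> real (card N) \<le> (2 ^ ((m+1)^2) * 4) ^ d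
           \<and> (\<forall>z\<in>vecs d. \<exists>v\<in>N. (2 * real m - 1) * nrm d z \<le> (2 * real m + 1) * \<bar>ip d z v\<bar>)"
proof -
  define B where "B = (m+1)^2 * d"
  define gr where "gr = (\<lambda>(g::nat \<Rightarrow> int) i. real_of_int (g i))"
  define nz where "nz = (\<lambda>g i. gr g i / nrm d (gr g))"
  define G where "G = {g \<in> latt d B. (\<Sum>i<d. (g i)^2) > 0}"
  define N where "N = nz ` G"
  have ipgr: "ip d (gr g) (gr g) = real_of_int (\<Sum>i<d. (g i)^2)" for g
    unfolding gr_def ip_def by (simp add: power2_eq_square)
  have fl: "finite (latt d B)" "real (card (latt d B)) \<le> 2 ^ B * 4 ^ d" using latt_card by auto
  have finG: "finite G" unfolding G_def using fl by simp
  have finN: "finite N" unfolding N_def using finG by simp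
  have "card N \<le> card G" unfolding N_def using finG by (rule card_image_le)
  also have "card G \<le> card (latt d B)" unfolding G_def using fl by (intro card_mono) auto
  finally have "real (card N) \<le> 2 ^ B * 4 ^ d" using fl by linarith
  also have "(2::real) ^ B * 4 ^ d = (2 ^ ((m+1)^2) * 4) ^ d"
    unfolding B_def by (simp add: power_mult power_mult_distrib)
  finally have cardN: "real (card N) \<le> (2 ^ ((m+1)^2) * 4) ^ d" .
  define g0 where "g0 = (\<lambda>i::nat. if i = 0 then (1::int) else 0)"
  have "(\<Sum>i<d. (g0 i)^2) = (\<Sum>i<d. if i = 0 then 1 else 0)"
    unfolding g0_def by (intro sum.cong) auto
  also have "\<dots> = 1" using d by simp
  finally have g0s: "(\<Sum>i<d. (g0 i)^2) = 1" .
  have "B \<ge> 1" unfolding B_def using d by simp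
  hence "g0 \<in> G" unfolding G_def latt_def using g0s d by (auto simp: g0_def)
  hence Nne: "N \<noteq> {}" unfolding N_def by auto
  have Nsph: "N \<subseteq> usphere d"
  proof
    fix v assume "v \<in> N"
    then obtain g where g: "g \<in> G" and v: "v = nz g" unfolding N_def by auto
    have s: "(\<Sum>i<d. (g i)^2) > 0" using g unfolding G_def by simp
    have pos: "ip d (gr g) (gr g) > 0" unfolding ipgr using s by (simp only: of_int_0_less_iff)
    have "v \<in> vecs d" using g unfolding v nz_def gr_def G_def latt_def vecs_def by auto
    moreover have "ip d v v = 1"
    proof -
      have "ip d v v = ip d (gr g) (gr g) / (nrm d (gr g))^2"
        unfolding v nz_def ip_def by (simp add: sum_divide_distrib power2_eq_square)
      also have "\<dots> = 1" using pos unfolding nrm_sq by simp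
      finally show ?thesis .
    qed
    ultimately show "v \<in> usphere d" unfolding usphere_def by simp
  qed
  have norming: "\<exists>v\<in>N. (2 * real m - 1) * nrm d z \<le> (2 * real m + 1) * \<bar>ip d z v\<bar>" if z: "z \<in> vecs d" for z
  proof (cases "nrm d z > 0")
    case False
    hence "nrm d z = 0" using nrm_nonneg[of d z] by simp
    thus ?thesis using Nne m by auto
  next
    case True
    obtain g :: "nat \<Rightarrow> int" where g0: "\<forall>i\<ge>d. g i = 0"
      and gle: "ip d (gr g) (gr g) \<le> (real m + 1/2)^2 * real d"
      and gpos: "ip d (gr g) (gr g) > 0"
      and main: "(2 * real m - 1) * nrm d z * nrm d (gr g) \<le> (2 * real m + 1) * ip d z (gr g)"
      using norming_core[OF m z True] unfolding gr_def by blast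
    have "real_of_int (\<Sum>i<d. (g i)^2) \<le> real B"
    proof -
      have "(real m + 1/2)^2 * real d \<le> (real m + 1)^2 * real d"
        by (intro mult_right_mono power_mono) auto
      moreover have "real_of_int (\<Sum>i<d. (g i)^2) = ip d (gr g) (gr g)" by (simp only: ipgr)
      moreover have "real B = (real m + 1)^2 * real d" unfolding B_def by simp
      ultimately show ?thesis using gle by linarith
    qed
    hence "(\<Sum>i<d. (g i)^2) \<le> int B" by linarith
    moreover have "(\<Sum>i<d. (g i)^2) > 0" using gpos unfolding ipgr by (simp only: of_int_0_less_iff)
    ultimately have gG: "g \<in> G" unfolding G_def latt_def using g0 by auto
    have npos: "nrm d (gr g) > 0" unfolding nrm_def using gpos by simp
    have "ip d z (nz g) = ip d z (gr g) / nrm d (gr g)"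
      unfolding nz_def ip_def by (simp add: sum_divide_distrib)
    moreover have "(2 * real m - 1) * nrm d z \<le> (2 * real m + 1) * ip d z (gr g) / nrm d (gr g)"
      using main npos by (simp add: pos_le_divide_eq mult.commute mult.left_commute)
    ultimately have "(2 * real m - 1) * nrm d z \<le> (2 * real m + 1) * ip d z (nz g)" by simp
    also have "\<dots> \<le> (2 * real m + 1) * \<bar>ip d z (nz g)\<bar>" by (intro mult_left_mono) auto
    finally show ?thesis using gG unfolding N_def by blast
  qed
  show ?thesis using finN Nne Nsph cardN norming by blast
qed

lemma ip_diff_swap: "ip d (x - y) (x - y) = ip d (y - x) (y - x)"
  by (simp add: ip_fun_diff ip_commute)

lemma OPT_net_upper:
  assumes finN: "finite N" and Nne: "N \<noteq> {}" and Nsph: "N \<subseteq> usphere d" and T: "card N \<le> T"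
    and norming: "\<And>z. z \<in> vecs d \<Longrightarrow> \<exists>v\<in>N. a * nrm d z \<le> b * \<bar>ip d z v\<bar>"
    and a: "a > 0" and b: "b \<ge> 0" and \<delta>: "\<delta> > 0" and \<eta>: "\<eta> > 0"
  shows "OPT d T \<delta> \<le> ereal (sqrt (2 * (b / a)^2 * \<delta>^2 + \<eta>))"
proof -
  obtain ns where ns: "set ns = N" "distinct ns" using finite_distinct_list[OF finN] by blast
  have len: "length ns = card N" using ns distinct_card by metis
  have nsne: "ns \<noteq> []" using ns Nne by auto
  define q where "q = (\<lambda>rs::real list. if length rs < length ns then ns ! length rs else hd ns)"
  define K where "K = (\<lambda>rs::real list. {x \<in> vecs d. \<forall>t<length ns. \<bar>rs ! t - ip d x (ns ! t)\<bar> \<le> \<delta>})"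
  define R2 where "R2 = 2 * (b / a)^2 * \<delta>^2 + \<eta>"
  define out where "out = (\<lambda>rs. SOME c. c \<in> vecs d \<and> (\<forall>x\<in>K rs. ip d (x - c) (x - c) \<le> R2))"
  have ex: "\<exists>c. c \<in> vecs d \<and> (\<forall>x\<in>K rs. ip d (x - c) (x - c) \<le> R2)" for rs
  proof (cases "K rs = {}")
    case True
    have "(\<lambda>i. 0::real) \<in> vecs d" unfolding vecs_def by simp
    thus ?thesis using True by blast
  next
    case False
    have diam: "ip d (x - y) (x - y) \<le> (2 * (b / a) * \<delta>)^2" if x: "x \<in> K rs" and y: "y \<in> K rs" for x y
    proof -
      have xv: "x \<in> vecs d" and yv: "y \<in> vecs d" using x y unfolding K_def by auto
      obtain v where v: "v \<in> N" and nv: "a * nrm d (x - y) \<le> b * \<bar>ip d (x - y) v\<bar>"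
        using norming[OF vecs_diff[OF xv yv]] by blast
      obtain t where t: "t < length ns" "ns ! t = v" using v ns by (metis in_set_conv_nth)
      have "\<bar>ip d (x - y) v\<bar> \<le> 2 * \<delta>"
      proof -
        have "\<bar>rs ! t - ip d x v\<bar> \<le> \<delta>" "\<bar>rs ! t - ip d y v\<bar> \<le> \<delta>" using x y t unfolding K_def by auto
        thus ?thesis unfolding ip_fun_diff by linarith
      qed
      hence "a * nrm d (x - y) \<le> b * (2 * \<delta>)" using nv b by (meson mult_left_mono order_trans)
      hence "nrm d (x - y) \<le> 2 * (b / a) * \<delta>" using a by (simp add: field_simps)
      hence "(nrm d (x - y))^2 \<le> (2 * (b / a) * \<delta>)^2" by (intro power_mono nrm_nonneg)
      thus ?thesis unfolding nrm_sq .
    qed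
    have Ksub: "K rs \<subseteq> vecs d" unfolding K_def by auto
    obtain c where c: "c \<in> vecs d" "\<forall>x\<in>K rs. ip d (x - c) (x - c) \<le> (2 * (b / a) * \<delta>)^2 / 2 + \<eta>"
      using jung_lite[OF Ksub False diam \<eta>] by blast
    have "(2 * (b / a) * \<delta>)^2 / 2 + \<eta> = R2" unfolding R2_def using a by (simp add: power2_eq_square field_simps)
    thus ?thesis using c by auto
  qed
  have out: "out rs \<in> vecs d \<and> (\<forall>x\<in>K rs. ip d (x - out rs) (x - out rs) \<le> R2)" for rs
    unfolding out_def using ex[of rs] by (rule someI_ex)
  have qs: "q rs \<in> usphere d" for rs
  proof -
    have "q rs \<in> set ns" unfolding q_def using nsne by auto
    thus ?thesis using ns Nsph by auto
  qed
  have valid: "valid_recon d q out" unfolding valid_recon_def using qs out by auto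
  have "err d T \<delta> q out \<le> ereal (sqrt R2)"
  proof (rule err_upper)
    fix x rs assume x: "x \<in> vecs d" and c: "consistent d T \<delta> q x rs"
    have "x \<in> K rs"
      unfolding K_def
    proof (intro CollectI conjI allI impI x)
      fix t assume t: "t < length ns"
      hence tT: "t < T" using len T by simp
      have "length rs = T" using c unfolding consistent_def by simp
      hence "q (take t rs) = ns ! t" unfolding q_def using t tT by simp
      thus "\<bar>rs ! t - ip d x (ns ! t)\<bar> \<le> \<delta>" using c tT unfolding consistent_def by metis
    qed
    hence "ip d (x - out rs) (x - out rs) \<le> R2" using out by blast
    thus "nrm d (out rs - x) \<le> sqrt R2" unfolding nrm_def by (simp add: ip_diff_swap)
  qed
  hence "OPT d T \<delta> \<le> ereal (sqrt R2)" using OPT_upper[OF valid] by (meson order_trans)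
  thus ?thesis unfolding R2_def .
qed

lemma bad_card:
  fixes v :: "nat \<Rightarrow> real"
  assumes v: "(\<Sum>i<d. (v i)^2) = 1" and a: "a > 0"
  shows "real (card {\<sigma>\<in>PiE {..<d} (\<lambda>_. {-1,1::real}). (\<Sum>i<d. \<sigma> i * v i) \<ge> a}) \<le> 2 ^ d * exp (-(a^2) / 2)"
proof -
  define P where "P = PiE {..<d} (\<lambda>_. {-1,1::real})"
  define Bd where "Bd = {\<sigma>\<in>P. (\<Sum>i<d. \<sigma> i * v i) \<ge> a}"
  have finP: "finite P" unfolding P_def by (intro finite_PiE) auto
  have finB: "finite Bd" unfolding Bd_def using finP by simp
  have "real (card Bd) * exp (a^2) = (\<Sum>\<sigma>\<in>Bd. exp (a * a))" by (simp add: power2_eq_square)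
  also have "\<dots> \<le> (\<Sum>\<sigma>\<in>Bd. exp (a * (\<Sum>i<d. \<sigma> i * v i)))"
    by (intro sum_mono) (use a in \<open>auto simp: Bd_def\<close>)
  also have "\<dots> \<le> (\<Sum>\<sigma>\<in>P. exp (a * (\<Sum>i<d. \<sigma> i * v i)))"
    by (rule sum_mono2) (use finP in \<open>auto simp: Bd_def\<close>)
  also have "\<dots> = (\<Sum>\<sigma>\<in>P. \<Prod>i<d. exp (a * v i * \<sigma> i))"
    by (intro sum.cong refl) (simp add: sum_distrib_left exp_sum mult_ac)
  also have "\<dots> = (\<Prod>i<d. \<Sum>s\<in>{-1,1::real}. exp (a * v i * s))"
    unfolding P_def by (rule prod_sum_PiE[symmetric]) auto
  also have "\<dots> = (\<Prod>i<d. exp (a * v i) + exp (- (a * v i)))" by (simp add: add.commute)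
  also have "\<dots> \<le> (\<Prod>i<d. 2 * exp ((a * v i)^2 / 2))"
    by (intro prod_mono conjI cosh_bound) (auto intro: add_nonneg_nonneg)
  also have "\<dots> = 2 ^ d * exp (\<Sum>i<d. (a * v i)^2 / 2)"
    by (simp add: prod.distrib exp_sum)
  also have "(\<Sum>i<d. (a * v i)^2 / 2) = a^2 / 2"
    using v by (simp add: power_mult_distrib sum_divide_distrib[symmetric] sum_distrib_left[symmetric])
  finally have "real (card Bd) * exp (a^2) \<le> 2 ^ d * exp (a^2 / 2)" .
  hence "real (card Bd) \<le> 2 ^ d * exp (a^2 / 2) / exp (a^2)" by (simp add: field_simps)
  also have "2 ^ d * exp (a^2 / 2) / exp (a^2) = 2 ^ d * exp (-(a^2) / 2)"
  proof -
    have e: "a^2/2 - a^2 = -(a^2)/2" by simp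
    have "exp (a^2/2) / exp (a^2) = exp (-(a^2)/2)" by (simp only: exp_diff[symmetric] e)
    thus ?thesis by (metis times_divide_eq_right)
  qed
  finally show ?thesis unfolding Bd_def P_def .
qed

lemma sign_vec:
  fixes vs :: "nat \<Rightarrow> nat \<Rightarrow> real"
  assumes vs: "\<And>t. t < T \<Longrightarrow> (\<Sum>i<d. (vs t i)^2) = 1" and a: "a > 0"
    and small: "2 * real T * exp (-(a^2) / 2) < 1"
  shows "\<exists>\<sigma>\<in>PiE {..<d} (\<lambda>_. {-1,1::real}). \<forall>t<T. \<bar>\<Sum>i<d. \<sigma> i * vs t i\<bar> < a"
proof -
  define P where "P = PiE {..<d} (\<lambda>_. {-1,1::real})"
  define Bp where "Bp = (\<lambda>t. {\<sigma>\<in>P. (\<Sum>i<d. \<sigma> i * vs t i) \<ge> a})"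
  define Bm where "Bm = (\<lambda>t. {\<sigma>\<in>P. (\<Sum>i<d. \<sigma> i * (- vs t i)) \<ge> a})"
  have finP: "finite P" unfolding P_def by (intro finite_PiE) auto
  have cardP: "card P = 2 ^ d" unfolding P_def by (simp add: card_PiE numeral_2_eq_2)
  have cBp: "real (card (Bp t)) \<le> 2 ^ d * exp (-(a^2) / 2)" if "t < T" for t
    unfolding Bp_def P_def using bad_card[OF vs[OF that] a] .
  have cBm: "real (card (Bm t)) \<le> 2 ^ d * exp (-(a^2) / 2)" if "t < T" for t
  proof -
    have "(\<Sum>i<d. (- vs t i)^2) = 1" using vs[OF that] by simp
    thus ?thesis unfolding Bm_def P_def using bad_card[where v="\<lambda>i. - vs t i" and d=d and a=a] a by simp
  qed
  define Bad where "Bad = (\<Union>t\<in>{..<T}. Bp t \<union> Bm t)"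
  have "card Bad \<le> (\<Sum>t<T. card (Bp t \<union> Bm t))" unfolding Bad_def by (rule card_UN_le) simp
  also have "\<dots> \<le> (\<Sum>t<T. card (Bp t) + card (Bm t))" by (intro sum_mono card_Un_le)
  finally have "real (card Bad) \<le> (\<Sum>t<T. real (card (Bp t)) + real (card (Bm t)))"
    by (metis (mono_tags, lifting) of_nat_add of_nat_le_iff of_nat_sum sum.cong)
  also have "\<dots> \<le> (\<Sum>t<T. 2 * (2 ^ d * exp (-(a^2) / 2)))"
    by (intro sum_mono) (use cBp cBm in fastforce)
  also have "\<dots> = 2 ^ d * (2 * real T * exp (-(a^2) / 2))" by simp
  also have "\<dots> < 2 ^ d" using small by simp
  finally have r: "real (card Bad) < 2 ^ d" .
  have "real (card Bad) < real (card P)" using r unfolding cardP by simp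
  hence "card Bad < card P" by simp
  hence lt: "card Bad < card P" by simp
  have "\<not> P \<subseteq> Bad"
  proof
    assume sub: "P \<subseteq> Bad"
    have "finite Bad" unfolding Bad_def Bp_def Bm_def using finP by auto
    hence "card P \<le> card Bad" using sub by (rule card_mono)
    thus False using lt by simp
  qed
  then obtain \<sigma> where \<sigma>: "\<sigma> \<in> P" "\<sigma> \<notin> Bad" by blast
  have "\<bar>\<Sum>i<d. \<sigma> i * vs t i\<bar> < a" if t: "t < T" for t
  proof -
    have "\<sigma> \<notin> Bp t" "\<sigma> \<notin> Bm t" using \<sigma> t unfolding Bad_def by auto
    hence "(\<Sum>i<d. \<sigma> i * vs t i) < a" "(\<Sum>i<d. \<sigma> i * (- vs t i)) < a"
      using \<sigma> unfolding Bp_def Bm_def by auto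
    moreover have "(\<Sum>i<d. \<sigma> i * (- vs t i)) = - (\<Sum>i<d. \<sigma> i * vs t i)"
      by (simp add: sum_negf)
    ultimately show ?thesis by linarith
  qed
  thus ?thesis using \<sigma> unfolding P_def by blast
qed

lemma OPT_subexp_lower:
  assumes d: "d \<ge> 1" and \<delta>: "\<delta> > 0" and a: "a > 0"
    and small: "2 * real T * exp (-(a^2) / 2) < 1"
  shows "ereal (\<delta> * sqrt (real d) / a) \<le> OPT d T \<delta>"
proof (rule OPT_lower)
  fix q out assume v: "valid_recon d q out"
  define ans where "ans = (\<lambda>_::nat \<Rightarrow> real. 0::real)"
  define vs where "vs = (\<lambda>t. q (tr ans q t))"
  have vsu: "vs t \<in> usphere d" for t using v unfolding valid_recon_def vs_def by auto
  have vs1: "(\<Sum>i<d. (vs t i)^2) = 1" for t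
    using vsu[of t] unfolding usphere_def ip_def by (simp add: power2_eq_square)
  have "\<exists>\<sigma>\<in>PiE {..<d} (\<lambda>_. {-1,1::real}). \<forall>t<T. \<bar>\<Sum>i<d. \<sigma> i * vs t i\<bar> < a"
    by (rule sign_vec[OF _ a small]) (rule vs1)
  then obtain \<sigma> where \<sigma>P: "\<sigma> \<in> PiE {..<d} (\<lambda>_. {-1,1::real})"
    and \<sigma>all: "\<forall>t<T. \<bar>\<Sum>i<d. \<sigma> i * vs t i\<bar> < a" by (rule bexE)
  have \<sigma>: "\<bar>\<Sum>i<d. \<sigma> i * vs t i\<bar> < a" if "t < T" for t using \<sigma>all that by simp
  define sd where "sd = sqrt (real d)"
  have sd: "sd > 0" "sd * sd = real d" unfolding sd_def using d by auto
  define R where "R = \<delta> * sd / a"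
  have R: "R > 0" unfolding R_def using \<delta> sd a by simp
  define u where "u = (\<lambda>i. if i < d then \<sigma> i / sd else 0)"
  have sq: "\<sigma> i * \<sigma> i = 1" if "i < d" for i using \<sigma>P that by (auto simp: PiE_def Pi_def)
  have uu: "ip d u u = 1"
  proof -
    have "ip d u u = (\<Sum>i<d. 1 / (sd * sd))" unfolding ip_def u_def
      by (intro sum.cong refl) (simp add: sq)
    also have "\<dots> = 1" using sd d by simp
    finally show ?thesis .
  qed
  have uv: "\<bar>ip d u (vs t)\<bar> < a / sd" if "t < T" for t
  proof -
    have "ip d u (vs t) = (\<Sum>i<d. \<sigma> i * vs t i) / sd"
      unfolding ip_def u_def by (simp add: sum_divide_distrib)
    thus ?thesis using \<sigma>[OF that] sd by (simp add: divide_strict_right_mono)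
  qed
  define c where "c = out (tr ans q T)"
  have cons: "\<bar>ans (q (tr ans q t)) - ip d (\<lambda>i. s * u i) (q (tr ans q t))\<bar> \<le> \<delta>"
    if "t < T" and s: "\<bar>s\<bar> = R" for t s
  proof -
    have "\<bar>ans (q (tr ans q t)) - ip d (\<lambda>i. s * u i) (q (tr ans q t))\<bar> = R * \<bar>ip d u (vs t)\<bar>"
      unfolding ans_def vs_def ip_scale_left using s by (simp add: abs_mult)
    also have "\<dots> \<le> R * (a / sd)" using uv[OF that(1)] R by (intro mult_left_mono) auto
    also have "\<dots> = \<delta>" unfolding R_def using sd a by simp
    finally show ?thesis .
  qed
  have xv: "(\<lambda>i. s * u i) \<in> vecs d" for s unfolding vecs_def u_def by auto
  have e1: "ereal (nrm d (c - (\<lambda>i. R * u i))) \<le> err d T \<delta> q out"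
    unfolding c_def by (rule err_lower[OF xv]) (rule cons, auto simp: R abs_of_pos)
  have e2: "ereal (nrm d (c - (\<lambda>i. (-R) * u i))) \<le> err d T \<delta> q out"
    unfolding c_def by (rule err_lower[OF xv]) (rule cons, auto simp: R abs_of_pos)
  have sum: "ip d (c - (\<lambda>i. R * u i)) (c - (\<lambda>i. R * u i)) + ip d (c - (\<lambda>i. (-R) * u i)) (c - (\<lambda>i. (-R) * u i))
      = 2 * ip d c c + 2 * R^2"
    unfolding ip_fun_diff ip_scale_left ip_scale_right uu by (simp add: ip_commute power2_eq_square algebra_simps)
  have "R \<le> nrm d (c - (\<lambda>i. R * u i)) \<or> R \<le> nrm d (c - (\<lambda>i. (-R) * u i))"
  proof (rule ccontr)
    assume "\<not> ?thesis"
    hence l: "nrm d (c - (\<lambda>i. R * u i)) < R" "nrm d (c - (\<lambda>i. (-R) * u i)) < R" by auto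
    have "(nrm d (c - (\<lambda>i. R * u i)))^2 < R^2" using l(1) by (intro power_strict_mono nrm_nonneg) auto
    moreover have "(nrm d (c - (\<lambda>i. (-R) * u i)))^2 < R^2" using l(2) by (intro power_strict_mono nrm_nonneg) auto
    ultimately have "2 * ip d c c + 2 * R^2 < 2 * R^2" unfolding nrm_sq sum[symmetric] by linarith
    thus False using ip_self_nonneg[of d c] by linarith
  qed
  hence "ereal R \<le> err d T \<delta> q out" using e1 e2 by (meson ereal_less_eq(3) order_trans)
  thus "ereal (\<delta> * sqrt (real d) / a) \<le> err d T \<delta> q out" unfolding R_def sd_def .
qed

lemma OPT_upper_m:
  fixes m d T :: nat
  assumes m: "m \<ge> 1" and d: "d \<ge> 1" and \<delta>: "\<delta> > 0" and \<eta>: "\<eta> > 0"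
    and T: "real T \<ge> (2 ^ ((m+1)^2) * 4) ^ d"
  shows "OPT d T \<delta> \<le> ereal (sqrt (2 * ((2 * real m + 1) / (2 * real m - 1))^2 * \<delta>^2 + \<eta>))"
proof -
  obtain N where N: "finite N" "N \<noteq> {}" "N \<subseteq> usphere d" "real (card N) \<le> (2 ^ ((m+1)^2) * 4) ^ d"
    and nm: "\<forall>z\<in>vecs d. \<exists>v\<in>N. (2 * real m - 1) * nrm d z \<le> (2 * real m + 1) * \<bar>ip d z v\<bar>"
    using net_exists[OF m d] by blast
  have "real (card N) \<le> real T" using N(4) T by linarith
  hence cT: "card N \<le> T" by simp
  have a: "2 * real m - 1 > 0" using m by simp
  show ?thesis
    by (rule OPT_net_upper[OF N(1) N(2) N(3) cT _ a _ \<delta> \<eta>]) (use nm in auto)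
qed

lemma ereal_diff_ge: "ereal X \<le> A \<Longrightarrow> ereal X - ereal y \<le> A - ereal y"
  by (cases A) auto

lemma ereal_diff_le: "A \<le> ereal X \<Longrightarrow> A - ereal y \<le> ereal X - ereal y"
  by (cases A) auto

lemma OPT_inf_bounds:
  assumes d: "d \<ge> 1" and \<delta>: "\<delta> > 0"
  shows "\<exists>y. OPT_inf d \<delta> = ereal y \<and> sqrt (2 * \<delta>^2 * (1 - 1 / real d)) \<le> y \<and> y \<le> sqrt (19 * \<delta>^2)"
proof -
  have up: "OPT d (64 ^ d) \<delta> \<le> ereal (sqrt (2 * ((2 * real (1::nat) + 1) / (2 * real (1::nat) - 1))^2 * \<delta>^2 + \<delta>^2))"
  proof -
    have e0: "((1::nat)+1)^2 = 4" by (simp add: power2_eq_square)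
    have e: "(2::real) ^ ((1+1)^2) * 4 = 64" unfolding e0 by simp
    have "real ((64::nat) ^ d) \<ge> (2 ^ ((1+1)^2) * 4) ^ d" unfolding e by simp
    thus ?thesis by (intro OPT_upper_m) (use d \<delta> in auto)
  qed
  have "OPT_inf d \<delta> \<le> ereal (sqrt (19 * \<delta>^2))"
    using order_trans[OF OPT_inf_le up] by simp
  moreover have "ereal (sqrt (2 * \<delta>^2 * (1 - 1 / real d))) \<le> OPT_inf d \<delta>"
    by (rule OPT_inf_ge) (rule OPT_simplex_lower[OF d \<delta>])
  ultimately show ?thesis by (cases "OPT_inf d \<delta>") auto
qed

lemma rho_bound:
  fixes m :: nat
  assumes m: "m \<ge> 1"
  shows "((2 * real m + 1) / (2 * real m - 1))^2 \<le> 1 + 8 / real m"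
proof -
  define k where "k = 2 * real m - 1"
  have k1: "k \<ge> 1" "k \<ge> real m" unfolding k_def using m by auto
  have kp: "k > 0" using k1 by simp
  have kk: "2 * real m + 1 = k + 2" "2 * real m - 1 = k" unfolding k_def by simp_all
  have "((2 * real m + 1) / (2 * real m - 1))^2 = ((k + 2) / k)^2" by (simp only: kk)
  also have "\<dots> = 1 + 4 / k + 4 / k^2" using kp by (simp add: field_simps power2_eq_square)
  also have "4 / k^2 \<le> 4 / k"
  proof -
    have "k \<le> k^2" using k1 by (simp add: power2_eq_square)
    thus ?thesis using kp by (intro divide_left_mono) auto
  qed
  hence "1 + 4 / k + 4 / k^2 \<le> 1 + 8 / k" by simp
  also have "8 / k \<le> 8 / real m" using k1 m by (intro divide_left_mono) auto
  finally show ?thesis by simp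
qed

lemma part1:
  assumes \<delta>: "\<delta> > 0" and T1: "\<And>d. T d \<ge> 1"
    and lo: "(\<lambda>d. ln (real (T d))) \<in> o(\<lambda>d. real d)"
  shows "((\<lambda>d. ExcessErr d (T d) \<delta>) \<longlongrightarrow> \<infinity>) sequentially"
  unfolding tendsto_PInfty
proof
  fix r :: real
  define C where "C = sqrt (19 * \<delta>^2)"
  define M where "M = max 1 (r + C + 1)"
  have M: "M \<ge> 1" "M \<ge> r + C + 1" unfolding M_def by auto
  define c where "c = \<delta>^2 / (4 * M^2)"
  have c: "c > 0" unfolding c_def using \<delta> M by simp
  have ev1: "eventually (\<lambda>d. norm (ln (real (T d))) \<le> c * norm (real d)) sequentially"
    using landau_o.smallD[OF lo c] .
  obtain N :: nat where N: "real N > 4 * M^2 * (ln 2 + 1) / \<delta>^2" using reals_Archimedean2 by blast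
  have ev2: "eventually (\<lambda>d. d \<ge> max N 1) sequentially" by (rule eventually_ge_at_top)
  show "eventually (\<lambda>d. ereal r < ExcessErr d (T d) \<delta>) sequentially"
    using ev1 ev2
  proof eventually_elim
    case (elim d)
    have d1: "d \<ge> 1" and dN: "real d \<ge> real N" using elim(2) by auto
    have T1': "real (T d) \<ge> 1" using T1[of d] by simp
    have lnT0: "ln (real (T d)) \<ge> 0" using T1' by simp
    have lnT: "ln (real (T d)) \<le> c * real d" using elim(1) lnT0 by simp
    have ln2: "ln (2::real) > 0" by simp
    have ln2T: "ln (2 * real (T d)) = ln 2 + ln (real (T d))" using T1' by (simp add: ln_mult)
    define a where "a = sqrt (2 * ln (2 * real (T d)) + 2)"
    have arg: "2 * ln (2 * real (T d)) + 2 > 0" using ln2T lnT0 ln2 by linarith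
    have a: "a > 0" unfolding a_def using arg by simp
    have a2: "a^2 = 2 * ln (2 * real (T d)) + 2" unfolding a_def using arg by simp
    have small: "2 * real (T d) * exp (-(a^2) / 2) < 1"
    proof -
      have e1: "-(a^2) / 2 = -1 - ln (2 * real (T d))" using a2 by simp
      have "exp (-(a^2) / 2) = exp (-1) / exp (ln (2 * real (T d)))" unfolding e1 by (rule exp_diff)
      also have "exp (ln (2 * real (T d))) = 2 * real (T d)" using T1' by simp
      finally have "2 * real (T d) * exp (-(a^2) / 2) = exp (-1)" using T1' by simp
      thus ?thesis by simp
    qed
    have OPTl: "ereal (\<delta> * sqrt (real d) / a) \<le> OPT d (T d) \<delta>"
      by (rule OPT_subexp_lower[OF d1 \<delta> a small])
    have Mp: "M > 0" using M by simp
    have f1: "2 * M^2 * ln (real (T d)) \<le> \<delta>^2 * real d / 2"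
    proof -
      have "2 * M^2 * ln (real (T d)) \<le> 2 * M^2 * (c * real d)"
        using lnT by (intro mult_left_mono) auto
      also have "\<dots> = \<delta>^2 * real d / 2" unfolding c_def using Mp by (simp add: field_simps)
      finally show ?thesis .
    qed
    have f2: "2 * M^2 * (ln 2 + 1) < \<delta>^2 * real d / 2"
    proof -
      have "4 * M^2 * (ln 2 + 1) / \<delta>^2 < real d" using N dN by linarith
      hence "4 * M^2 * (ln 2 + 1) < real d * \<delta>^2" using \<delta> by (simp add: pos_divide_less_eq)
      thus ?thesis by (simp add: algebra_simps)
    qed
    have f3: "M^2 * a^2 = 2 * M^2 * (ln 2 + 1) + 2 * M^2 * ln (real (T d))"
      unfolding a2 ln2T by (simp add: algebra_simps)
    have g1: "(M * a)^2 = M^2 * a^2" by (rule power_mult_distrib)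
    have g2: "(\<delta> * sqrt (real d))^2 = \<delta>^2 * real d" by (simp add: power_mult_distrib)
    have "(M * a)^2 < (\<delta> * sqrt (real d))^2"
      unfolding g1 g2 using f1 f2 f3 by linarith
    hence "M * a < \<delta> * sqrt (real d)" by (rule power2_less_imp_less) (use \<delta> in simp)
    hence key: "M < \<delta> * sqrt (real d) / a" using a by (simp add: pos_less_divide_eq)
    obtain y where y: "OPT_inf d \<delta> = ereal y" "y \<le> C"
      using OPT_inf_bounds[OF d1 \<delta>] unfolding C_def by blast
    have "r < \<delta> * sqrt (real d) / a - y" using key y(2) M by linarith
    hence "ereal r < ereal (\<delta> * sqrt (real d) / a - y)" by simp
    also have "\<dots> = ereal (\<delta> * sqrt (real d) / a) - ereal y" by simp
    also have "\<dots> \<le> OPT d (T d) \<delta> - ereal y" by (rule ereal_diff_ge[OF OPTl])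
    finally show "ereal r < ExcessErr d (T d) \<delta>" unfolding ExcessErr_def y(1) .
  qed
qed

lemma part2:
  assumes \<delta>: "\<delta> > 0" and T1: "\<And>d. T d \<ge> 1"
    and hi: "filterlim (\<lambda>d. ln (real (T d)) / real d) at_top sequentially"
  shows "((\<lambda>d. ExcessErr d (T d) \<delta>) \<longlongrightarrow> 0) sequentially"
proof (rule order_tendstoI)
  fix a :: ereal assume a: "a < 0"
  show "eventually (\<lambda>d. a < ExcessErr d (T d) \<delta>) sequentially"
    using eventually_ge_at_top[of "1::nat"]
  proof eventually_elim
    case (elim d)
    obtain y where y: "OPT_inf d \<delta> = ereal y" using OPT_inf_bounds[OF elim \<delta>] by blast
    have "ereal y \<le> OPT d (T d) \<delta>" using OPT_inf_le[of d \<delta> "T d"] y by simp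
    hence "0 \<le> OPT d (T d) \<delta> - ereal y" by (cases "OPT d (T d) \<delta>") auto
    thus "a < ExcessErr d (T d) \<delta>" unfolding ExcessErr_def y using a by simp
  qed
next
  fix b :: ereal assume b: "0 < b"
  obtain e :: real where e: "e > 0" "ereal e \<le> b"
  proof (cases b)
    case (real r) thus ?thesis using b that[of r] by simp
  next
    case PInf thus ?thesis using that[of 1] by simp
  next
    case MInf thus ?thesis using b by simp
  qed
  define \<eta> where "\<eta> = e^2 / 4"
  have \<eta>: "\<eta> > 0" unfolding \<eta>_def using e by simp
  obtain m :: nat where m0: "real m \<ge> 64 * \<delta>^2 / e^2 + 1" using real_arch_simple by blast
  have m1: "m \<ge> 1"
  proof -
    have "64 * \<delta>^2 / e^2 \<ge> 0" by simp
    hence "real m \<ge> 1" using m0 by linarith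
    thus ?thesis by simp
  qed
  define \<rho> where "\<rho> = (2 * real m + 1) / (2 * real m - 1)"
  have \<rho>: "\<rho>^2 \<le> 1 + 8 / real m" unfolding \<rho>_def by (rule rho_bound[OF m1])
  have m2: "2 * (\<rho>^2 - 1) * \<delta>^2 \<le> e^2 / 4"
  proof -
    have mp: "real m > 0" using m1 by simp
    have "2 * (\<rho>^2 - 1) * \<delta>^2 \<le> 2 * (8 / real m) * \<delta>^2"
      using \<rho> by (intro mult_right_mono mult_left_mono) auto
    also have "\<dots> = 16 * \<delta>^2 / real m" by simp
    also have "\<dots> \<le> e^2 / 4"
    proof -
      have "64 * \<delta>^2 / e^2 \<le> real m" using m0 by linarith
      hence "64 * \<delta>^2 \<le> real m * e^2" using e by (simp add: pos_divide_le_eq)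
      thus ?thesis using mp by (simp add: pos_divide_le_eq field_simps)
    qed
    finally show ?thesis .
  qed
  define K where "K = (2::real) ^ ((m+1)^2) * 4"
  have Kp: "K > 0" unfolding K_def by simp
  have ev1: "eventually (\<lambda>d. ln K \<le> ln (real (T d)) / real d) sequentially"
    using hi unfolding filterlim_at_top by blast
  obtain N :: nat where N: "real N > 8 * \<delta>^2 / e^2" using reals_Archimedean2 by blast
  have ev2: "eventually (\<lambda>d. d \<ge> max N 1) sequentially" by (rule eventually_ge_at_top)
  show "eventually (\<lambda>d. ExcessErr d (T d) \<delta> < b) sequentially"
    using ev1 ev2
  proof eventually_elim
    case (elim d)
    have d1: "d \<ge> 1" and dN: "real d \<ge> real N" using elim(2) by auto
    have dp: "real d > 0" using d1 by simp
    have T1': "real (T d) \<ge> 1" using T1[of d] by simp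
    have "real d * ln K \<le> ln (real (T d))" using elim(1) dp by (simp add: pos_le_divide_eq mult.commute)
    hence "ln (K ^ d) \<le> ln (real (T d))" using Kp by (simp add: ln_realpow)
    hence TK: "K ^ d \<le> real (T d)" using Kp T1' by (subst (asm) ln_le_cancel_iff) auto
    define U where "U = 2 * \<rho>^2 * \<delta>^2 + \<eta>"
    define L where "L = 2 * \<delta>^2 * (1 - 1 / real d)"
    have OPTu: "OPT d (T d) \<delta> \<le> ereal (sqrt U)"
      unfolding U_def \<rho>_def by (rule OPT_upper_m[OF m1 d1 \<delta> \<eta>]) (use TK in \<open>simp add: K_def\<close>)
    obtain y where y: "OPT_inf d \<delta> = ereal y" "sqrt L \<le> y"
      using OPT_inf_bounds[OF d1 \<delta>] unfolding L_def by blast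
    have "1 / real d \<le> 1" using d1 by simp
    hence L0: "L \<ge> 0" unfolding L_def by simp
    have dl: "2 * \<delta>^2 / real d < e^2 / 4"
    proof -
      have "8 * \<delta>^2 / e^2 < real d" using N dN by linarith
      hence "8 * \<delta>^2 < real d * e^2" using e by (simp add: pos_divide_less_eq)
      thus ?thesis using dp by (simp add: pos_divide_less_eq field_simps)
    qed
    have UL: "U - L < e^2"
    proof -
      have "U - L = 2 * (\<rho>^2 - 1) * \<delta>^2 + \<eta> + 2 * \<delta>^2 / real d"
        unfolding U_def L_def using dp by (simp add: field_simps)
      moreover have "e^2 > 0" using e by simp
      ultimately show ?thesis using m2 dl \<eta>_def by linarith
    qed
    have diff: "sqrt U - y < e"
    proof (cases "U \<le> L")
      case True
      hence "sqrt U \<le> sqrt L" by simp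
      thus ?thesis using y(2) e by linarith
    next
      case False
      hence "sqrt U = sqrt (L + (U - L))" by simp
      also have "\<dots> \<le> sqrt L + sqrt (U - L)" using L0 False by (intro sqrt_add_le_add_sqrt) auto
      finally have s1: "sqrt U \<le> sqrt L + sqrt (U - L)" .
      have "sqrt (U - L) < sqrt (e^2)" using UL by (subst real_sqrt_less_iff) 
      hence "sqrt (U - L) < e" using e by simp
      thus ?thesis using s1 y(2) by linarith
    qed
    have "ExcessErr d (T d) \<delta> \<le> ereal (sqrt U) - ereal y"
      unfolding ExcessErr_def y(1) by (rule ereal_diff_le[OF OPTu])
    also have "\<dots> = ereal (sqrt U - y)" by simp
    also have "\<dots> < ereal e" using diff by simp
    also have "\<dots> \<le> b" using e by simp
    finally show "ExcessErr d (T d) \<delta> < b" .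
  qed
qed

theorem theorem3:
  fixes \<delta> :: real and T :: "nat \<Rightarrow> nat"
  assumes "\<delta> > 0" and "\<And>d. T d \<ge> 1"
  shows "((\<lambda>d. ln (real (T d))) \<in> o(\<lambda>d. real d) \<longrightarrow>
            ((\<lambda>d. ExcessErr d (T d) \<delta>) \<longlongrightarrow> \<infinity>) sequentially)
       \<and> (filterlim (\<lambda>d. ln (real (T d)) / real d) at_top sequentially \<longrightarrow>
            ((\<lambda>d. ExcessErr d (T d) \<delta>) \<longlongrightarrow> 0) sequentially)"
  using part1[of \<delta> T, OF assms(1) assms(2)] part2[of \<delta> T, OF assms(1) assms(2)] by blast


end
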